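(* Let $Y=(Y_{ij})$ be a $3\times 3$ real symmetric positive definite Minkowski-reduced matrix. Put $$c_1=\min\bigl(Y_{11}-Y_{12}-|Y_{13}|,\ Y_{22}-Y_{21}-Y_{23},\ Y_{33}-Y_{32}-|Y_{31}|\bigr),\qquad c=\max\Bigl(c_1,\ \tfrac{1}{100}Y_{11}\Bigr).$$ Then for all $n\in\mathbb{R}^3$ we have ${}^t n\, Y\, n\ \ge\ c\,{}^t n\, n$.
   Context: A real symmetric positive definite $g\times g$ matrix $Y$ is Minkowski-reduced if (a) for all $j=1,\dots,g$ and all $v=(v_1,\dots,v_g)\in\mathbb{Z}^g$ with $\gcd(v_j,\dots,v_g)=1$ one has ${}^t v Y v\ge Y_{jj}$, and (b) for all $j=1,\dots,g-1$ one has $Y_{j,j+1}\ge 0$. *)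

theory Defs
  imports "HOL-Analysis.Analysis"
begin

text \<open>g x g real matrices are represented as functions nat => nat => real,
  with entries indexed by 1..g; vectors as functions nat => real indexed by 1..g.\<close>

definition qform :: "nat \<Rightarrow> (nat \<Rightarrow> nat \<Rightarrow> real) \<Rightarrow> (nat \<Rightarrow> real) \<Rightarrow> real" where
  "qform g Y v = (\<Sum>i=1..g. \<Sum>j=1..g. v i * Y i j * v j)"

definition sym_posdef :: "nat \<Rightarrow> (nat \<Rightarrow> nat \<Rightarrow> real) \<Rightarrow> bool" where
  "sym_posdef g Y \<longleftrightarrow>
     (\<forall>i\<in>{1..g}. \<forall>j\<in>{1..g}. Y i j = Y j i) \<and>
     (\<forall>v::nat \<Rightarrow> real. (\<exists>i\<in>{1..g}. v i \<noteq> 0) \<longrightarrow> qform g Y v > 0)"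

definition minkowski_reduced :: "nat \<Rightarrow> (nat \<Rightarrow> nat \<Rightarrow> real) \<Rightarrow> bool" where
  "minkowski_reduced g Y \<longleftrightarrow>
     (\<forall>j\<in>{1..g}. \<forall>v::nat \<Rightarrow> int. Gcd (v ` {j..g}) = 1 \<longrightarrow>
         qform g Y (\<lambda>i. of_int (v i)) \<ge> Y j j) \<and>
     (\<forall>j\<in>{1..<g}. Y j (j+1) \<ge> 0)"

end

theory Submission
  imports Defs
begin

lemma s3: "{1..3::nat} = {1,2,3}" by auto
lemma s23: "{2..3::nat} = {2,3}" by auto

lemma qf3': "qform 3 Y n = n 1 * Y 1 1 * n 1 + n 1 * Y 1 2 * n 2 + n 1 * Y 1 3 * n 3
  + n 2 * Y 2 1 * n 1 + n 2 * Y 2 2 * n 2 + n 2 * Y 2 3 * n 3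
  + n 3 * Y 3 1 * n 1 + n 3 * Y 3 2 * n 2 + n 3 * Y 3 3 * n 3"
  unfolding qform_def s3 by (simp add: algebra_simps)

lemma aux1:
  fixes a b c p q r x y z :: real
  assumes "p \<ge> 0" "r \<ge> 0"
  shows "a*x*x + b*y*y + c*z*z + 2*p*x*y + 2*q*x*z + 2*r*y*z \<ge>
    min (a - p - \<bar>q\<bar>) (min (b - p - r) (c - r - \<bar>q\<bar>)) * (x*x + y*y + z*z)"
proof -
  define m where "m = min (a - p - \<bar>q\<bar>) (min (b - p - r) (c - r - \<bar>q\<bar>))"
  have h1: "2*p*x*y \<ge> - p*(x*x+y*y)"
  proof -
    have "p*((x+y)*(x+y)) \<ge> 0" using assms by simp
    then show ?thesis by (simp add: algebra_simps)
  qed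
  have h2: "2*r*y*z \<ge> - r*(y*y+z*z)"
  proof -
    have "r*((y+z)*(y+z)) \<ge> 0" using assms by simp
    then show ?thesis by (simp add: algebra_simps)
  qed
  have h3: "2*q*x*z \<ge> - \<bar>q\<bar>*(x*x+z*z)"
  proof (cases "q \<ge> 0")
    case True
    have "q*((x+z)*(x+z)) \<ge> 0" using True by simp
    then show ?thesis using True by (simp add: algebra_simps)
  next
    case False
    have "q*((x-z)*(x-z)) \<le> 0" using False by (intro mult_nonpos_nonneg) auto
    then show ?thesis using False by (simp add: algebra_simps)
  qed
  have e1: "(a - p - \<bar>q\<bar>) * (x*x) \<ge> m * (x*x)"
    by (rule mult_right_mono) (auto simp: m_def)
  have e2: "(b - p - r) * (y*y) \<ge> m * (y*y)"
    by (rule mult_right_mono) (auto simp: m_def)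
  have e3: "(c - r - \<bar>q\<bar>) * (z*z) \<ge> m * (z*z)"
    by (rule mult_right_mono) (auto simp: m_def)
  have "a*x*x + b*y*y + c*z*z + 2*p*x*y + 2*q*x*z + 2*r*y*z \<ge>
      (a - p - \<bar>q\<bar>) * (x*x) + (b - p - r) * (y*y) + (c - r - \<bar>q\<bar>) * (z*z)"
    using h1 h2 h3 by (simp add: algebra_simps)
  with e1 e2 e3 show ?thesis unfolding m_def[symmetric] by (simp add: algebra_simps)
qed

lemma aux2:
  fixes a b c p q r x y z :: real
  assumes "b - a \<ge> 0" "c - b \<ge> 0" "p \<ge> 0" "r \<ge> 0"
    "a + 2*q \<ge> 0" "a - 2*q \<ge> 0" "a + b - 2*p + 2*q - 2*r \<ge> 0" "b - 2*r \<ge> 0" "a - 2*p \<ge> 0"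
  shows "a*x*x + b*y*y + c*z*z + 2*p*x*y + 2*q*x*z + 2*r*y*z \<ge> a/100 * (x*x + y*y + z*z)"
proof -
  define w1 where "w1 = 1/40*a + 22/25*p - 1/20*q"
  define w2 where "w2 = -23/50*a + 49/100*b + 19/50*p - 3/50*q + 13/25*r"
  define w3 where "w3 = 1/50*a - 49/50*b + c - 1/25*p + 1/25*q - 1/25*r"
  define w4 where "w4 = 9/40*a + 9/20*q"
  define w5 where "w5 = 21/50*a + 1/50*b - 21/25*p + 1/25*q - 1/25*r"
  define w6 where "w6 = 6/25*a - 23/50*p + 1/50*q"
  define w7 where "w7 = 23/200*a - 17/100*p + 3/50*q"
  define w8 where "w8 = 9/200*a - 2/25*p + 1/100*q"
  define w9 where "w9 = 1/50*p"
  define w10 where "w10 = -1/4*a + 49/100*b - 12/25*r"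
  define w11 where "w11 = 19/200*a - 19/100*p"
  define w12 where "w12 = 49/200*a - 49/100*q"
  have nn: "w1 \<ge> 0" "w2 \<ge> 0" "w3 \<ge> 0" "w4 \<ge> 0" "w5 \<ge> 0" "w6 \<ge> 0"
     "w7 \<ge> 0" "w8 \<ge> 0" "w9 \<ge> 0" "w10 \<ge> 0" "w11 \<ge> 0" "w12 \<ge> 0"
    using assms unfolding w1_def w2_def w3_def w4_def w5_def w6_def w7_def w8_def w9_def
      w10_def w11_def w12_def by linarith+
  have id: "a*x*x + b*y*y + c*z*z + 2*p*x*y + 2*q*x*z + 2*r*y*z - a/100 * (x*x + y*y + z*z) =
     w1*((x+y)*(x+y)) + w2*((y+z)*(y+z)) + w3*(z*z) + w4*((x+z)*(x+z)) + w5*(y*y) + w6*(x*x)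
     + w7*((x+y+z)*(x+y+z)) + w8*((x-y)*(x-y)) + w9*((x+y-z)*(x+y-z)) + w10*((y-z)*(y-z))
     + w11*((x-y-z)*(x-y-z)) + w12*((x-z)*(x-z))"
    unfolding w1_def w2_def w3_def w4_def w5_def w6_def w7_def w8_def w9_def
      w10_def w11_def w12_def by algebra
  have "0 \<le> w1*((x+y)*(x+y)) + w2*((y+z)*(y+z)) + w3*(z*z) + w4*((x+z)*(x+z)) + w5*(y*y) + w6*(x*x)
     + w7*((x+y+z)*(x+y+z)) + w8*((x-y)*(x-y)) + w9*((x+y-z)*(x+y-z)) + w10*((y-z)*(y-z))
     + w11*((x-y-z)*(x-y-z)) + w12*((x-z)*(x-z))"
    by (intro add_nonneg_nonneg; rule mult_nonneg_nonneg; simp add: nn)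
  then show ?thesis using id by linarith
qed

lemma mk3:
  assumes "minkowski_reduced 3 Y"
  shows "qform 3 Y (\<lambda>i. of_int (if i = 1 then (x::int) else if i = 2 then y else 1)) \<ge> Y 3 3"
proof -
  have "Gcd ((\<lambda>i::nat. if i = 1 then (x::int) else if i = 2 then y else 1) ` {3..3}) = 1"
    by simp
  then show ?thesis using assms unfolding minkowski_reduced_def by auto
qed

lemma maxle:
  fixes s t u1 u2 :: real
  assumes "s \<ge> 0" "t \<ge> u1 * s" "t \<ge> u2 * s"
  shows "t \<ge> max u1 u2 * s"
  using assms
  by (cases "u1 \<le> u2") (auto simp: max_def)

theorem lemma2p3:
  fixes Y :: "nat \<Rightarrow> nat \<Rightarrow> real"
  assumes "sym_posdef 3 Y"
    and "minkowski_reduced 3 Y"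
  shows "\<forall>n::nat \<Rightarrow> real.
     qform 3 Y n \<ge>
       max (min (Y 1 1 - Y 1 2 - \<bar>Y 1 3\<bar>)
                (min (Y 2 2 - Y 2 1 - Y 2 3) (Y 3 3 - Y 3 2 - \<bar>Y 3 1\<bar>)))
           (Y 1 1 / 100)
       * (\<Sum>i=1..3. n i * n i)"
proof
  fix n :: "nat \<Rightarrow> real"
  have sym: "Y 2 1 = Y 1 2" "Y 3 1 = Y 1 3" "Y 3 2 = Y 2 3"
    using assms(1) unfolding sym_posdef_def by auto
  have red: "\<forall>j\<in>{1..3}. \<forall>v::nat \<Rightarrow> int. Gcd (v ` {j..3}) = 1 \<longrightarrow>
         qform 3 Y (\<lambda>i. of_int (v i)) \<ge> Y j j" "\<forall>j\<in>{1..<3}. Y j (j+1) \<ge> 0"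
    using assms(2) unfolding minkowski_reduced_def by auto
  have p0: "Y 1 2 \<ge> 0" using bspec[OF red(2), of 1] by (simp add: numeral_2_eq_2)
  have r0: "Y 2 3 \<ge> 0" using bspec[OF red(2), of 2] by (simp add: numeral_2_eq_2 numeral_3_eq_3)
  have c1: "qform 3 Y (\<lambda>i. of_int (if i = 1 then (1::int) else if i = 2 then 0 else 1)) \<ge> Y 3 3"
    by (rule mk3[OF assms(2)])
  have c2: "qform 3 Y (\<lambda>i. of_int (if i = 1 then (-1::int) else if i = 2 then 0 else 1)) \<ge> Y 3 3"
    by (rule mk3[OF assms(2)])
  have c3: "qform 3 Y (\<lambda>i. of_int (if i = 1 then (1::int) else if i = 2 then -1 else 1)) \<ge> Y 3 3"
    by (rule mk3[OF assms(2)])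
  have c4: "qform 3 Y (\<lambda>i. of_int (if i = 1 then (0::int) else if i = 2 then -1 else 1)) \<ge> Y 3 3"
    by (rule mk3[OF assms(2)])
  have g2: "Gcd ((\<lambda>i::nat. if i = 1 then (-1::int) else if i = 2 then 1 else 0) ` {2..3}) = 1"
    by (simp add: s23)
  have c5: "qform 3 Y (\<lambda>i. of_int (if i = 1 then (-1::int) else if i = 2 then 1 else 0)) \<ge> Y 2 2"
    using red(1) g2 by auto
  have g3: "Gcd ((\<lambda>i::nat. if i = 1 then (0::int) else if i = 2 then 1 else 0) ` {1..3}) = 1"
    by (simp add: s3)
  have c6: "qform 3 Y (\<lambda>i. of_int (if i = 1 then (0::int) else if i = 2 then 1 else 0)) \<ge> Y 1 1"
    using red(1) g3 by auto
  have g4: "Gcd ((\<lambda>i::nat. if i = 1 then (0::int) else if i = 2 then 0 else 1) ` {2..3}) = 1"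
    by (simp add: s23)
  have c7: "qform 3 Y (\<lambda>i. of_int (if i = 1 then (0::int) else if i = 2 then 0 else 1)) \<ge> Y 2 2"
    using red(1) g4 by auto
  note cs = c1 c2 c3 c4 c5 c6 c7
  have k1: "Y 1 1 + 2 * Y 1 3 \<ge> 0" using c1 sym by (simp add: qf3')
  have k2: "Y 1 1 - 2 * Y 1 3 \<ge> 0" using c2 sym by (simp add: qf3')
  have k3: "Y 1 1 + Y 2 2 - 2 * Y 1 2 + 2 * Y 1 3 - 2 * Y 2 3 \<ge> 0" using c3 sym by (simp add: qf3')
  have k4: "Y 2 2 - 2 * Y 2 3 \<ge> 0" using c4 sym by (simp add: qf3')
  have k5: "Y 1 1 - 2 * Y 1 2 \<ge> 0" using c5 sym by (simp add: qf3')
  have k6: "Y 2 2 - Y 1 1 \<ge> 0" using c6 sym by (simp add: qf3')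
  have k7: "Y 3 3 - Y 2 2 \<ge> 0" using c7 sym by (simp add: qf3')
  have Q: "qform 3 Y n = Y 1 1 * n 1 * n 1 + Y 2 2 * n 2 * n 2 + Y 3 3 * n 3 * n 3
      + 2 * Y 1 2 * n 1 * n 2 + 2 * Y 1 3 * n 1 * n 3 + 2 * Y 2 3 * n 2 * n 3"
    unfolding qf3' sym by (simp add: algebra_simps)
  have S: "(\<Sum>i=1..3. n i * n i) = n 1 * n 1 + n 2 * n 2 + n 3 * n 3"
    unfolding s3 by simp
  have A1: "qform 3 Y n \<ge> min (Y 1 1 - Y 1 2 - \<bar>Y 1 3\<bar>)
                (min (Y 2 2 - Y 2 1 - Y 2 3) (Y 3 3 - Y 3 2 - \<bar>Y 3 1\<bar>)) * (\<Sum>i=1..3. n i * n i)"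
    unfolding Q S sym using aux1[OF p0 r0] by simp
  have A2: "qform 3 Y n \<ge> Y 1 1 / 100 * (\<Sum>i=1..3. n i * n i)"
    unfolding Q S using aux2[OF k6 k7 p0 r0 k1 k2 k3 k4 k5] by simp
  have "(\<Sum>i=1..3. n i * n i) \<ge> 0" by (intro sum_nonneg) simp
  then show "qform 3 Y n \<ge> max (min (Y 1 1 - Y 1 2 - \<bar>Y 1 3\<bar>)
                (min (Y 2 2 - Y 2 1 - Y 2 3) (Y 3 3 - Y 3 2 - \<bar>Y 3 1\<bar>)))
           (Y 1 1 / 100) * (\<Sum>i=1..3. n i * n i)"
    using maxle A1 A2 by blast
qed

end
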